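(* Let $0\le p\le 1$ be given. Suppose that $G$ is an $n$-vertex $r$-graph with density $q\ge p$ (and $p\binom{n}{r}$ is an integer). Then $H_r(n,p)\ge (p/q)^n e^{-2/p}H(G)(1-o(1))$, where $o(1)\to 0$ as $n\to\infty$.
   Context: An $r$-graph has a vertex set and an edge set consisting of $r$-element subsets of the vertex set. An $n$-vertex $r$-graph has density $p$ if it has exactly $p\binom{n}{r}$ edges. A Hamiltonian cycle of an $n$-vertex $r$-graph $G$ is given by an ordering $v_1,\dots,v_n$ of its vertices such that for every $i$ the set $\{v_i,\dots,v_{i+r-1}\}$ (indices modulo $n$) is an edge; the cycle is identified with this set of $n$ edges. $H(G)$ is the number of Hamiltonian cycles of $G$. $H_r(n,p)$ is the maximum of $H(G)$ over all $n$-vertex $r$-graphs of density $p$. *)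

theory Defs
  imports Complex_Main
begin

definition r_graph :: "nat \<Rightarrow> nat \<Rightarrow> nat set set \<Rightarrow> bool" where
  "r_graph n r E \<longleftrightarrow> E \<subseteq> {e. e \<subseteq> {..<n} \<and> card e = r}"

definition cycle_edges :: "nat \<Rightarrow> nat \<Rightarrow> (nat \<Rightarrow> nat) \<Rightarrow> nat set set" where
  "cycle_edges n r v = {{v ((i + j) mod n) | j. j < r} | i. i < n}"

text \<open>Hamiltonian cycles of E (identified with their edge sets).\<close>
definition ham_cycles :: "nat \<Rightarrow> nat \<Rightarrow> nat set set \<Rightarrow> nat set set set" where
  "ham_cycles n r E = {cycle_edges n r v | v. bij_betw v {..<n} {..<n} \<and>
      (\<forall>i<n. {v ((i + j) mod n) | j. j < r} \<in> E)}"

definition num_ham :: "nat \<Rightarrow> nat \<Rightarrow> nat set set \<Rightarrow> nat" where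
  "num_ham n r E = card (ham_cycles n r E)"

definition H_max :: "nat \<Rightarrow> nat \<Rightarrow> real \<Rightarrow> nat" where
  "H_max r n p = Max {num_ham n r E | E. r_graph n r E \<and> real (card E) = p * real (n choose r)}"

end

theory Submission
  imports Defs
begin

lemma ham_cycles_alt:
  "ham_cycles n r E = {C \<in> {cycle_edges n r v | v. bij_betw v {..<n} {..<n}}. C \<subseteq> E}"
  unfolding ham_cycles_def cycle_edges_def by blast

lemma ham_sub: "F \<subseteq> E \<Longrightarrow> ham_cycles n r F = {C \<in> ham_cycles n r E. C \<subseteq> F}"
  unfolding ham_cycles_alt by blast

lemma card_cyc: "card (cycle_edges n r v) \<le> n"
proof -
  have "cycle_edges n r v = (\<lambda>i. {v ((i + j) mod n) | j. j < r}) ` {..<n}"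
  proof -
    have gen: "{f i | i. i < n} = f ` {..<n}" for f :: "nat \<Rightarrow> nat set" by auto
    show ?thesis unfolding cycle_edges_def by (rule gen)
  qed
  then show ?thesis using card_image_le[of "{..<n}" "\<lambda>i. {v ((i + j) mod n) | j. j < r}"] by simp
qed

lemma ham_card_le: "C \<in> ham_cycles n r E \<Longrightarrow> card C \<le> n"
  unfolding ham_cycles_alt using card_cyc by blast

lemma ham_subE: "C \<in> ham_cycles n r E \<Longrightarrow> C \<subseteq> E"
  unfolding ham_cycles_alt by blast

lemma binom_ratio:
  "k \<le> m \<Longrightarrow> m \<le> M \<Longrightarrow>
   real (M choose m) * ((real m - real k) / real M) ^ k \<le> real ((M - k) choose (m - k))"
proof (induction k arbitrary: M m)
  case 0
  then show ?case by simp
next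
  case (Suc k)
  obtain m' where m': "m = Suc m'" using Suc.prems by (cases m) auto
  obtain M' where M': "M = Suc M'" using Suc.prems m' by (cases M) auto
  have km: "k \<le> m'" "m' \<le> M'" using Suc.prems m' M' by auto
  have eq: "real (Suc M' choose Suc m') = real (Suc M') / real (Suc m') * real (M' choose m')"
    using Suc_times_binomial_eq[of M' m'] by (simp add: field_simps flip: of_nat_mult)
  have b0: "0 \<le> (real m' - real k) / real (Suc M')" using km by simp
  have pk: "((real m' - real k) / real (Suc M')) ^ k \<le> ((real m' - real k) / real M') ^ k"
  proof (cases "k = 0")
    case True then show ?thesis by simp
  next
    case False
    then have "M' > 0" using km by simp
    then show ?thesis using km by (intro power_mono) (auto simp: frac_le)
  qed
  have f: "(real m' - real k) / real (Suc m') \<le> 1" by simp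
  have d: "real m - real (Suc k) = real m' - real k" by (simp add: m')
  have gen0: "S > 0 \<Longrightarrow> s > 0 \<Longrightarrow> S / s * B * (a / S * P) = a / s * (B * P)" for S s a B P :: real
    by (simp add: field_simps)
  have gen: "real (Suc M') / real (Suc m') * B * (a / real (Suc M') * P) = a / real (Suc m') * (B * P)" for a B P
    by (rule gen0) auto
  have "real (M choose m) * ((real m - real (Suc k)) / real M) ^ Suc k
      = ((real m' - real k) / real (Suc m')) * (real (M' choose m') * ((real m' - real k) / real (Suc M')) ^ k)"
    unfolding d unfolding m' M' eq power_Suc by (rule gen)
  also have "\<dots> \<le> 1 * (real (M' choose m') * ((real m' - real k) / real M') ^ k)"
    using f pk b0 km by (intro mult_mono mult_left_mono) auto
  also have "\<dots> \<le> real ((M' - k) choose (m' - k))" using Suc.IH km by simp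
  finally show ?case using m' M' by simp
qed

lemma count_super:
  assumes "finite E" "C \<subseteq> E" "card C \<le> m"
  shows "(card E - card C) choose (m - card C) \<le> card {F. F \<subseteq> E \<and> card F = m \<and> C \<subseteq> F}"
proof -
  have fC: "finite C" using assms finite_subset by blast
  have "card {G. G \<subseteq> E - C \<and> card G = m - card C} = (card E - card C) choose (m - card C)"
    using n_subsets[of "E - C" "m - card C"] assms by (simp add: card_Diff_subset fC)
  moreover have "card {G. G \<subseteq> E - C \<and> card G = m - card C} \<le> card {F. F \<subseteq> E \<and> card F = m \<and> C \<subseteq> F}"
  proof (rule card_inj_on_le[where f = "\<lambda>G. G \<union> C"])
    show "inj_on (\<lambda>G. G \<union> C) {G. G \<subseteq> E - C \<and> card G = m - card C}"
      by (auto simp: inj_on_def)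
    show "(\<lambda>G. G \<union> C) ` {G. G \<subseteq> E - C \<and> card G = m - card C} \<subseteq> {F. F \<subseteq> E \<and> card F = m \<and> C \<subseteq> F}"
    proof
      fix X assume "X \<in> (\<lambda>G. G \<union> C) ` {G. G \<subseteq> E - C \<and> card G = m - card C}"
      then obtain G where G: "G \<subseteq> E - C" "card G = m - card C" and X: "X = G \<union> C" by blast
      have "finite G" using G assms finite_subset by blast
      then have "card (G \<union> C) = card G + card C" using G fC by (intro card_Un_disjoint) auto
      then show "X \<in> {F. F \<subseteq> E \<and> card F = m \<and> C \<subseteq> F}" using G assms X by auto
    qed
    show "finite {F. F \<subseteq> E \<and> card F = m \<and> C \<subseteq> F}" using assms by simp
  qed
  ultimately show ?thesis by simp
qed


lemma choose2_real: "real (n choose 2) = real n * (real n - 1) / 2"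
proof -
  have e: "even (n * (n - 1))" by (cases n) auto
  have "2 * (n choose 2) = n * (n - 1)"
    using e by (simp add: choose_two)
  then have "2 * real (n choose 2) = real n * real (n - 1)"
    by (metis of_nat_mult of_nat_numeral)
  then show ?thesis by (cases n) auto
qed

lemma H_max_ge:
  assumes "r_graph n r F" "real (card F) = p * real (n choose r)"
  shows "num_ham n r F \<le> H_max r n p"
proof -
  have "{num_ham n r E | E. r_graph n r E \<and> real (card E) = p * real (n choose r)}
        \<subseteq> num_ham n r ` Pow (Pow {..<n})"
    unfolding r_graph_def by (auto intro!: imageI)
  then have "finite {num_ham n r E | E. r_graph n r E \<and> real (card E) = p * real (n choose r)}"
    by (rule finite_subset) auto
  then show ?thesis unfolding H_max_def by (rule Max_ge) (use assms in blast)
qed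

lemma main_bound:
  assumes E: "r_graph n r E" and m: "real m = p * real N" and M: "real (card E) = q * real N"
    and N: "N = n choose r" and nm: "n \<le> m" and mM: "m \<le> card E" and n0: "0 < n"
  shows "real (num_ham n r E) * ((real m - real n) / real (card E)) ^ n \<le> real (H_max r n p)"
proof -
  define MM where "MM = card E"
  have EP: "E \<subseteq> Pow {..<n}" using E unfolding r_graph_def by blast
  have finE: "finite E" using finite_subset[OF EP] by simp
  define A where "A = {F. F \<subseteq> E \<and> card F = m}"
  define HE where "HE = ham_cycles n r E"
  have HP: "HE \<subseteq> Pow E" unfolding HE_def using ham_subE by blast
  have finHE: "finite HE" using finite_subset[OF HP] finE by simp
  have finA: "finite A" unfolding A_def using finE by simp
  have cardA: "card A = MM choose m" unfolding A_def MM_def using n_subsets[OF finE] by simp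
  have MMpos: "0 < MM" using nm mM n0 MM_def by simp
  have Apos: "0 < real (card A)" using cardA mM MM_def by simp
  define b where "b = (real m - real n) / real MM"
  have b0: "0 \<le> b" "b \<le> 1" using nm mM MMpos unfolding b_def MM_def by auto
  have each: "real (MM choose m) * b ^ n \<le> real ((MM - card C) choose (m - card C))" if C: "C \<in> HE" for C
  proof -
    have cn: "card C \<le> n" using C ham_card_le unfolding HE_def by blast
    have "b ^ n \<le> b ^ card C" using b0 cn by (intro power_decreasing) auto
    also have "\<dots> \<le> ((real m - real (card C)) / real MM) ^ card C"
      using cn MMpos b0 unfolding b_def by (intro power_mono divide_right_mono) auto
    finally have "real (MM choose m) * b ^ n \<le> real (MM choose m) * ((real m - real (card C)) / real MM) ^ card C"
      by (intro mult_left_mono) auto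
    also have "\<dots> \<le> real ((MM - card C) choose (m - card C))"
      using cn nm mM MM_def by (intro binom_ratio) auto
    finally show ?thesis .
  qed
  have cnt: "(MM - card C) choose (m - card C) \<le> card {F \<in> A. C \<subseteq> F}" if C: "C \<in> HE" for C
  proof -
    have "C \<subseteq> E" using C ham_subE unfolding HE_def by blast
    moreover have "card C \<le> m" using C ham_card_le nm unfolding HE_def by fastforce
    ultimately have "(card E - card C) choose (m - card C) \<le> card {F. F \<subseteq> E \<and> card F = m \<and> C \<subseteq> F}"
      using count_super finE by blast
    moreover have "{F. F \<subseteq> E \<and> card F = m \<and> C \<subseteq> F} = {F \<in> A. C \<subseteq> F}" unfolding A_def by auto
    ultimately show ?thesis unfolding MM_def by simp
  qed
  have swap: "(\<Sum>F\<in>A. num_ham n r F) = (\<Sum>C\<in>HE. card {F \<in> A. C \<subseteq> F})"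
  proof -
    have "(\<Sum>F\<in>A. num_ham n r F) = (\<Sum>F\<in>A. \<Sum>C\<in>HE. if C \<subseteq> F then 1 else 0)"
    proof (rule sum.cong[OF refl])
      fix F assume "F \<in> A"
      then have "F \<subseteq> E" unfolding A_def by auto
      then have "num_ham n r F = card {C \<in> HE. C \<subseteq> F}" unfolding num_ham_def HE_def using ham_sub by metis
      also have "\<dots> = (\<Sum>C\<in>HE. if C \<subseteq> F then 1 else 0)"
        using finHE by (simp add: sum.If_cases Int_def)
      finally show "num_ham n r F = (\<Sum>C\<in>HE. if C \<subseteq> F then 1 else 0)" .
    qed
    also have "\<dots> = (\<Sum>C\<in>HE. \<Sum>F\<in>A. if C \<subseteq> F then 1 else 0)" by (rule sum.swap)
    also have "\<dots> = (\<Sum>C\<in>HE. card {F \<in> A. C \<subseteq> F})"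
      using finA by (simp add: sum.If_cases Int_def)
    finally show ?thesis .
  qed
  have "real (card HE) * (real (card A) * b ^ n) = (\<Sum>C\<in>HE. real (MM choose m) * b ^ n)"
    using cardA by simp
  also have "\<dots> \<le> (\<Sum>C\<in>HE. real (card {F \<in> A. C \<subseteq> F}))"
    using each cnt by (intro sum_mono) (meson of_nat_le_iff order_trans)
  also have "\<dots> = real (\<Sum>F\<in>A. num_ham n r F)" using swap by simp
  also have "\<dots> \<le> real (\<Sum>F\<in>A. H_max r n p)"
  proof -
    have "(\<Sum>F\<in>A. num_ham n r F) \<le> (\<Sum>F\<in>A. H_max r n p)"
    proof (rule sum_mono)
      fix F assume "F \<in> A"
      then have "F \<subseteq> E" "card F = m" unfolding A_def by auto
      then show "num_ham n r F \<le> H_max r n p"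
        using E m N by (intro H_max_ge) (auto simp: r_graph_def)
    qed
    then show ?thesis by (simp only: of_nat_le_iff)
  qed
  also have "\<dots> = real (card A) * real (H_max r n p)" by simp
  finally have "real (card A) * (real (card HE) * b ^ n) \<le> real (card A) * real (H_max r n p)"
    by (simp add: algebra_simps)
  then have "real (card HE) * b ^ n \<le> real (H_max r n p)" using Apos by simp
  then show ?thesis unfolding b_def MM_def HE_def num_ham_def .
qed


lemma lim_aux: "(p::real) > 0 \<Longrightarrow> (\<lambda>n::nat. (1 - 2/(p*(real n - 1)))^n) \<longlonglongrightarrow> exp (- 2 / p)"
proof -
  assume p0: "p > 0"
  define a where "a = - 2 / p"
  have f: "(\<lambda>j. (1 + a / real j) ^ j) \<longlonglongrightarrow> exp a" by (rule tendsto_exp_limit_sequentially)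
  have g: "(\<lambda>j. 1 + a / real j) \<longlonglongrightarrow> 1 + 0"
    by (intro tendsto_intros lim_const_over_n)
  have "(\<lambda>j. (1 + a / real j) ^ j * (1 + a / real j)) \<longlonglongrightarrow> exp a * (1 + 0)"
    by (intro tendsto_mult f g)
  moreover have "(1 + a / real j) ^ j * (1 + a / real j) = (1 - 2/(p*(real (Suc j) - 1)))^(Suc j)" for j
    using p0 unfolding a_def by (simp add: field_simps)
  ultimately have "(\<lambda>j. (1 - 2/(p*(real (Suc j) - 1)))^(Suc j)) \<longlonglongrightarrow> exp a" by simp
  then show ?thesis unfolding a_def by (rule LIMSEQ_imp_Suc)
qed

theorem lemma1:
  fixes r :: nat and p :: real
  assumes "r \<ge> 2" and "0 \<le> p" and "p \<le> 1"
  shows "\<exists>\<epsilon> :: nat \<Rightarrow> real. \<epsilon> \<longlonglongrightarrow> 0 \<and>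
    (\<forall>n E q. r_graph n r E \<longrightarrow> real (card E) = q * real (n choose r) \<longrightarrow> p \<le> q \<longrightarrow>
       (\<exists>k::nat. p * real (n choose r) = real k) \<longrightarrow>
       real (H_max r n p) \<ge> (p / q) ^ n * exp (- 2 / p) * real (num_ham n r E) * (1 - \<epsilon> n))"
proof (cases "p = 0")
  case True
  define \<epsilon> :: "nat \<Rightarrow> real" where "\<epsilon> = (\<lambda>n. if n = 0 then 1 else 0)"
  have "\<epsilon> \<longlonglongrightarrow> 0"
  proof -
    have "eventually (\<lambda>n. (\<lambda>_. 0::real) n = \<epsilon> n) sequentially"
      unfolding \<epsilon>_def eventually_sequentially by (intro exI[of _ 1]) auto
    then show ?thesis using tendsto_cong[of "\<lambda>_. 0::real" \<epsilon> sequentially 0] by simp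
  qed
  moreover have "real (H_max r n p) \<ge> (p / q) ^ n * exp (- 2 / p) * real (num_ham n r E) * (1 - \<epsilon> n)"
    for n E q
    using True by (cases n) (auto simp: \<epsilon>_def)
  ultimately show ?thesis by blast
next
  case False
  then have p0: "p > 0" using assms by simp
  define n0 :: nat where "n0 = 2 * r + nat \<lceil>2 / p\<rceil> + 2"
  define \<epsilon> :: "nat \<Rightarrow> real" where
    "\<epsilon> = (\<lambda>n. if n < n0 then 1 else 1 - exp (2 / p) * (1 - 2/(p*(real n - 1)))^n)"
  have "\<epsilon> \<longlonglongrightarrow> 0"
  proof -
    have "(\<lambda>n. 1 - exp (2 / p) * (1 - 2/(p*(real n - 1)))^n) \<longlonglongrightarrow> 1 - exp (2 / p) * exp (- 2 / p)"
      by (intro tendsto_intros lim_aux p0)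
    moreover have "1 - exp (2 / p) * exp (- 2 / p) = 0"
      by (simp flip: exp_add)
    moreover have "eventually (\<lambda>n. 1 - exp (2 / p) * (1 - 2/(p*(real n - 1)))^n = \<epsilon> n) sequentially"
      unfolding \<epsilon>_def eventually_sequentially by (intro exI[of _ n0]) auto
    ultimately show ?thesis using tendsto_cong by fastforce
  qed
  moreover have "real (H_max r n p) \<ge> (p / q) ^ n * exp (- 2 / p) * real (num_ham n r E) * (1 - \<epsilon> n)"
    if E: "r_graph n r E" and Eq: "real (card E) = q * real (n choose r)" and pq: "p \<le> q"
      and k: "p * real (n choose r) = real k" for n E q k
  proof (cases "n < n0")
    case True
    then show ?thesis by (simp add: \<epsilon>_def)
  next
    case False
    define N where "N = n choose r"
    have q0: "q > 0" using p0 pq by simp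
    have "n choose 2 \<le> N" unfolding N_def using False assms(1) n0_def by (intro binomial_mono) auto
    then have NN: "real n * (real n - 1) / 2 \<le> real N" using choose2_real[of n] by (metis of_nat_le_iff)
    have n2: "real n \<ge> 2 / p + 2" using False n0_def by linarith
    then have pn: "p * (real n - 1) \<ge> 2" using p0 by (simp add: field_simps)
    have "2 / p \<ge> 0" using p0 by simp
    then have n1: "real n \<ge> 2" using n2 by linarith
    have nb1: "p * real N \<ge> p * (real n * (real n - 1) / 2)" using NN p0 by simp
    have nb2: "p * (real n * (real n - 1) / 2) \<ge> real n"
    proof -
      have "p * (real n * (real n - 1) / 2) = real n * (p * (real n - 1)) / 2" by (simp add: algebra_simps)
      moreover have "real n * 2 \<le> real n * (p * (real n - 1))" using pn by (intro mult_left_mono) auto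
      ultimately show ?thesis by linarith
    qed
    have "real n \<le> real k" using nb1 nb2 k N_def by simp
    then have nk: "n \<le> k" by simp
    have kM: "k \<le> card E" using k Eq pq N_def
      by (metis mult_right_mono of_nat_0_le_iff of_nat_le_iff)
    have "real n * (real n - 1) > 0" using n1 by (intro mult_pos_pos) auto
    then have Npos: "real N > 0" using NN by linarith
    have main: "real (num_ham n r E) * ((real k - real n) / real (card E)) ^ n \<le> real (H_max r n p)"
      by (rule main_bound[OF E _ Eq refl nk kM]) (use k n1 in auto)
    define x where "x = 2 / (p * (real n - 1))"
    have x1: "0 \<le> 1 - x" using pn p0 unfolding x_def by simp
    have nN: "real n / real N \<le> 2 / (real n - 1)"
      using NN Npos n1 by (simp add: field_simps)
    have base: "(p / q) * (1 - x) \<le> (real k - real n) / real (card E)"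
    proof -
      have "(real k - real n) / real (card E) = (p - real n / real N) / q"
        using k Eq N_def Npos q0 by (simp add: field_simps)
      moreover have "(p / q) * (1 - x) = (p - 2 / (real n - 1)) / q"
        unfolding x_def using p0 q0 n1 by (simp add: field_simps)
      ultimately show ?thesis using nN q0 by (simp add: divide_right_mono)
    qed
    have "(p / q) ^ n * exp (- 2 / p) * real (num_ham n r E) * (1 - \<epsilon> n)
        = real (num_ham n r E) * ((p / q) * (1 - x)) ^ n * (exp (- 2 / p) * exp (2 / p))"
    proof -
      have e: "1 - \<epsilon> n = exp (2 / p) * (1 - x) ^ n" using False by (simp add: \<epsilon>_def x_def)
      have h: "((p / q) * (1 - x)) ^ n = (p / q) ^ n * (1 - x) ^ n" by (rule power_mult_distrib)
      show ?thesis unfolding e h by (simp add: algebra_simps)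
    qed
    also have "\<dots> = real (num_ham n r E) * ((p / q) * (1 - x)) ^ n"
      by (simp flip: exp_add)
    also have "\<dots> \<le> real (num_ham n r E) * ((real k - real n) / real (card E)) ^ n"
      using base x1 p0 q0 by (intro mult_left_mono power_mono) auto
    finally show ?thesis using main by simp
  qed
  ultimately show ?thesis by blast
qed

end
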